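(* Let $\mathcal{H}=(H,(G_h)_{h\in H})$ be a point-finite, honest graph-decomposition of a graph $G$ into finite connected parts. Then the map $f\mapsto g_f$ from the directions of $G$ to the directions of $H$ is a bijection.
   Context: A graph-decomposition of $G$ is a pair $(H,(G_h)_{h\in H})$ of a graph $H$ and subgraphs $G_h\subseteq G$ such that $G=\bigcup_h G_h$ and, for every vertex $v$ of $G$, $H_v:=H[\{h:v\in G_h\}]$ is connected. It is point-finite if every $H_v$ is finite, and honest if $G_h\cap G_{h'}\ne\emptyset$ for every edge $hh'$ of $H$. A direction of a graph $X$ is a map $f$ assigning to every finite vertex set $Y$ of $X$ a component $f(Y)$ of $X-Y$ such that $f(Y)\supseteq f(Y')$ whenever $Y\subseteq Y'$. For a direction $f$ of $G$, $g_f$ is the direction of $H$ defined as follows: for a finite $Y\subseteq V(H)$ let $X_Y=\bigcup_{h\in Y}V(G_h)$ (finite since parts are finite); then $g_f(Y)$ is the component of $H-Y$ containing $\bigcup_{v\in f(X_Y)}H_v$. *)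

theory Defs
  imports Main
begin

definition graph :: "'v set \<Rightarrow> 'v set set \<Rightarrow> bool" where
  "graph V E \<longleftrightarrow> (\<forall>e\<in>E. e \<subseteq> V \<and> card e = 2)"

definition subgraph :: "'v set \<Rightarrow> 'v set set \<Rightarrow> 'v set \<Rightarrow> 'v set set \<Rightarrow> bool" where
  "subgraph V' E' V E \<longleftrightarrow> graph V' E' \<and> V' \<subseteq> V \<and> E' \<subseteq> E"

definition conn :: "'v set set \<Rightarrow> 'v set \<Rightarrow> bool" where
  "conn E S \<longleftrightarrow> S \<noteq> {} \<and>
     (\<forall>x\<in>S. \<forall>y\<in>S. (\<lambda>a b. a \<in> S \<and> b \<in> S \<and> {a, b} \<in> E)\<^sup>*\<^sup>* x y)"

definition component :: "'v set \<Rightarrow> 'v set set \<Rightarrow> 'v set \<Rightarrow> 'v set \<Rightarrow> bool" where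
  "component V E Y C \<longleftrightarrow> C \<subseteq> V - Y \<and> conn E C \<and>
     (\<forall>D. C \<subseteq> D \<and> D \<subseteq> V - Y \<and> conn E D \<longrightarrow> D = C)"

text \<open>Directions of (V,E); to make the set of directions well defined we require the
  value {} outside the domain (finite subsets of V).\<close>

definition direction :: "'v set \<Rightarrow> 'v set set \<Rightarrow> ('v set \<Rightarrow> 'v set) \<Rightarrow> bool" where
  "direction V E f \<longleftrightarrow>
     (\<forall>Y. finite Y \<and> Y \<subseteq> V \<longrightarrow> component V E Y (f Y)) \<and>
     (\<forall>Y Y'. finite Y' \<and> Y' \<subseteq> V \<and> Y \<subseteq> Y' \<longrightarrow> f Y' \<subseteq> f Y) \<and>
     (\<forall>Y. \<not> (finite Y \<and> Y \<subseteq> V) \<longrightarrow> f Y = {})"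

definition directions :: "'v set \<Rightarrow> 'v set set \<Rightarrow> ('v set \<Rightarrow> 'v set) set" where
  "directions V E = {f. direction V E f}"

text \<open>A graph-decomposition (H,(G_h)) of G: H = (VH,EH), G_h = (GV h, GE h).\<close>

definition graph_decomposition ::
  "'v set \<Rightarrow> 'v set set \<Rightarrow> 'h set \<Rightarrow> 'h set set \<Rightarrow> ('h \<Rightarrow> 'v set) \<Rightarrow> ('h \<Rightarrow> 'v set set) \<Rightarrow> bool" where
  "graph_decomposition VG EG VH EH GV GE \<longleftrightarrow>
     graph VG EG \<and> graph VH EH \<and>
     (\<forall>h\<in>VH. subgraph (GV h) (GE h) VG EG) \<and>
     VG = (\<Union>h\<in>VH. GV h) \<and> EG = (\<Union>h\<in>VH. GE h) \<and>
     (\<forall>v\<in>VG. conn EH {h\<in>VH. v \<in> GV h})"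

definition point_finite :: "'v set \<Rightarrow> 'h set \<Rightarrow> ('h \<Rightarrow> 'v set) \<Rightarrow> bool" where
  "point_finite VG VH GV \<longleftrightarrow> (\<forall>v\<in>VG. finite {h\<in>VH. v \<in> GV h})"

definition honest :: "'h set set \<Rightarrow> ('h \<Rightarrow> 'v set) \<Rightarrow> bool" where
  "honest EH GV \<longleftrightarrow> (\<forall>h h'. {h, h'} \<in> EH \<longrightarrow> GV h \<inter> GV h' \<noteq> {})"

definition induced_dir ::
  "'h set \<Rightarrow> 'h set set \<Rightarrow> ('h \<Rightarrow> 'v set) \<Rightarrow> ('v set \<Rightarrow> 'v set) \<Rightarrow> 'h set \<Rightarrow> 'h set" where
  "induced_dir VH EH GV f Y =
     (if finite Y \<and> Y \<subseteq> VH then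
        (THE C. component VH EH Y C \<and>
           (\<Union>v\<in>f (\<Union>h\<in>Y. GV h). {h\<in>VH. v \<in> GV h}) \<subseteq> C)
      else {})"

end

theory Submission
  imports Defs
begin


lemma lift: "r\<^sup>*\<^sup>* x y \<Longrightarrow> (\<And>a b. r a b \<Longrightarrow> s a b) \<Longrightarrow> s\<^sup>*\<^sup>* x y"
  by (induction rule: rtranclp_induct) (auto intro: rtranclp.rtrancl_into_rtrancl)

lemma conn_mono: assumes "conn E S" "E \<subseteq> E'" shows "conn E' S"
  unfolding conn_def
proof (intro conjI ballI)
  show "S \<noteq> {}" using assms by (simp add: conn_def)
  fix x y assume "x \<in> S" "y \<in> S"
  then have "(\<lambda>a b. a \<in> S \<and> b \<in> S \<and> {a, b} \<in> E)\<^sup>*\<^sup>* x y" using assms by (simp add: conn_def)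
  then show "(\<lambda>a b. a \<in> S \<and> b \<in> S \<and> {a, b} \<in> E')\<^sup>*\<^sup>* x y"
    by (rule lift) (use assms(2) in auto)
qed

lemma conn_UN:
  assumes S: "conn Ea S" and F: "\<And>a. a \<in> S \<Longrightarrow> conn Eb (F a)"
    and sh: "\<And>a b. a \<in> S \<Longrightarrow> b \<in> S \<Longrightarrow> {a,b} \<in> Ea \<Longrightarrow> F a \<inter> F b \<noteq> {}"
  shows "conn Eb (\<Union>a\<in>S. F a)"
proof -
  let ?U = "\<Union>a\<in>S. F a"
  let ?R = "\<lambda>x y. x \<in> ?U \<and> y \<in> ?U \<and> {x,y} \<in> Eb"
  have inF: "?R\<^sup>*\<^sup>* x y" if a: "a\<in>S" "x\<in>F a" "y \<in> F a" for a x y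
  proof -
    have "(\<lambda>p q. p \<in> F a \<and> q \<in> F a \<and> {p,q} \<in> Eb)\<^sup>*\<^sup>* x y"
      using F[OF a(1)] a unfolding conn_def by auto
    then show ?thesis by (rule lift) (use a(1) in auto)
  qed
  have main: "(\<lambda>x y. x \<in> S \<and> y \<in> S \<and> {x,y} \<in> Ea)\<^sup>*\<^sup>* a b \<Longrightarrow> a \<in> S \<Longrightarrow>
      \<forall>x\<in>F a. \<forall>y\<in>F b. ?R\<^sup>*\<^sup>* x y" for a b
  proof (induction rule: rtranclp_induct)
    case base
    then show ?case using inF by blast
  next
    case (step b c)
    then have bc: "b \<in> S" "c \<in> S" "{b,c} \<in> Ea" by auto
    obtain z where z: "z \<in> F b" "z \<in> F c" using sh[OF bc] by auto
    show ?case
    proof (intro ballI)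
      fix x y assume "x \<in> F a" "y \<in> F c"
      then have "?R\<^sup>*\<^sup>* x z" "?R\<^sup>*\<^sup>* z y" using step z inF[OF bc(2)] by auto
      then show "?R\<^sup>*\<^sup>* x y" by (rule rtranclp_trans)
    qed
  qed
  show ?thesis unfolding conn_def
  proof (intro conjI ballI)
    obtain a where "a \<in> S" using S unfolding conn_def by auto
    then show "?U \<noteq> {}" using F[of a] unfolding conn_def by auto
  next
    fix x y assume "x \<in> ?U" "y \<in> ?U"
    then obtain a b where ab: "a \<in> S" "b \<in> S" "x \<in> F a" "y \<in> F b" by auto
    then have "(\<lambda>x y. x \<in> S \<and> y \<in> S \<and> {x,y} \<in> Ea)\<^sup>*\<^sup>* a b" using S unfolding conn_def by auto
    then show "?R\<^sup>*\<^sup>* x y" using main ab by blast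
  qed
qed

lemma conn_Union_common:
  assumes F: "\<And>A. A \<in> F \<Longrightarrow> conn E A" and d: "\<And>A. A \<in> F \<Longrightarrow> d \<in> A" and ne: "F \<noteq> {}"
  shows "conn E (\<Union>F)"
proof -
  let ?R = "\<lambda>x y. x \<in> \<Union>F \<and> y \<in> \<Union>F \<and> {x,y} \<in> E"
  have inF: "?R\<^sup>*\<^sup>* x y" if a: "A\<in>F" "x\<in>A" "y \<in> A" for A x y
  proof -
    have "(\<lambda>p q. p \<in> A \<and> q \<in> A \<and> {p,q} \<in> E)\<^sup>*\<^sup>* x y"
      using F[OF a(1)] a unfolding conn_def by auto
    then show ?thesis by (rule lift) (use a(1) in auto)
  qed
  show ?thesis unfolding conn_def
  proof (intro conjI ballI)
    show "\<Union>F \<noteq> {}" using ne d by auto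
  next
    fix x y assume "x \<in> \<Union>F" "y \<in> \<Union>F"
    then obtain A B where "A \<in> F" "B \<in> F" "x \<in> A" "y \<in> B" by auto
    then have "?R\<^sup>*\<^sup>* x d" "?R\<^sup>*\<^sup>* d y" using inF d by auto
    then show "?R\<^sup>*\<^sup>* x y" by (rule rtranclp_trans)
  qed
qed

lemma conn_Un: assumes "conn E A" "conn E B" "A \<inter> B \<noteq> {}" shows "conn E (A \<union> B)"
proof -
  obtain d where d: "d \<in> A" "d \<in> B" using assms(3) by auto
  have "conn E (\<Union>{A,B})" by (rule conn_Union_common[where d=d]) (use assms d in auto)
  then show ?thesis by simp
qed

lemma comp_absorb:
  assumes C: "component V E Y C" and D: "conn E D" "D \<subseteq> V - Y" "D \<inter> C \<noteq> {}" shows "D \<subseteq> C"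
proof -
  have c: "C \<subseteq> V - Y" "conn E C" "\<And>D'. C \<subseteq> D' \<Longrightarrow> D' \<subseteq> V - Y \<Longrightarrow> conn E D' \<Longrightarrow> D' = C"
    using C unfolding component_def by auto
  have "conn E (C \<union> D)" using conn_Un[OF c(2) D(1)] D(3) by (simp add: Int_commute)
  then have "C \<union> D = C" using c D(2) by (intro c(3)) auto
  then show ?thesis by auto
qed

lemma comp_eq:
  assumes "component V E Y C" "component V E Y C'" "C \<inter> C' \<noteq> {}" shows "C = C'"
proof -
  have c: "C \<subseteq> V - Y" "conn E C" "C' \<subseteq> V - Y" "conn E C'"
    using assms unfolding component_def by auto
  have "C' \<subseteq> C" using comp_absorb[OF assms(1) c(4) c(3)] assms(3) by (simp add: Int_commute)
  moreover have "C \<subseteq> C'" using comp_absorb[OF assms(2) c(2) c(1)] assms(3) by simp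
  ultimately show ?thesis by simp
qed

lemma comp_exists:
  assumes D: "conn E D" "D \<subseteq> V - Y" shows "\<exists>C. component V E Y C \<and> D \<subseteq> C"
proof -
  define F where "F = {D'. D \<subseteq> D' \<and> D' \<subseteq> V - Y \<and> conn E D'}"
  have "D \<noteq> {}" using D(1) by (simp add: conn_def)
  then obtain d where d: "d \<in> D" by blast
  have DF: "D \<in> F" using D unfolding F_def by simp
  have FF: "\<And>A. A \<in> F \<Longrightarrow> D \<subseteq> A \<and> A \<subseteq> V - Y \<and> conn E A" unfolding F_def by simp
  have cF: "conn E (\<Union>F)"
  proof (rule conn_Union_common[where d=d])
    show "\<And>A. A \<in> F \<Longrightarrow> conn E A" using FF by blast
    show "\<And>A. A \<in> F \<Longrightarrow> d \<in> A" using FF d by blast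
    show "F \<noteq> {}" using DF by blast
  qed
  have sub: "\<Union>F \<subseteq> V - Y" using FF by blast
  have DU: "D \<subseteq> \<Union>F" using DF by blast
  have "component V E Y (\<Union>F)" unfolding component_def
  proof (intro conjI allI impI cF sub)
    fix D'' assume h: "\<Union>F \<subseteq> D'' \<and> D'' \<subseteq> V - Y \<and> conn E D''"
    then have "D \<subseteq> D''" using DU by (meson subset_trans)
    then have "D'' \<in> F" using h unfolding F_def by simp
    then show "D'' = \<Union>F" using h by blast
  qed
  then show ?thesis using DU by blast
qed

lemma comp_the:
  assumes "conn E D" "D \<subseteq> V - Y"
  shows "component V E Y (THE C. component V E Y C \<and> D \<subseteq> C) \<and> D \<subseteq> (THE C. component V E Y C \<and> D \<subseteq> C)"
proof (rule theI')
  have "D \<noteq> {}" using assms by (simp add: conn_def)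
  then show "\<exists>!C. component V E Y C \<and> D \<subseteq> C"
  proof -
    obtain C where C: "component V E Y C" "D \<subseteq> C" using comp_exists[OF assms] by blast
    have "C' = C" if "component V E Y C' \<and> D \<subseteq> C'" for C'
      using comp_eq[of V E Y C' C] that C \<open>D \<noteq> {}\<close> by blast
    then show ?thesis using C by blast
  qed
qed

lemma comp_the_eq:
  assumes "conn E D" "D \<subseteq> V - Y" "component V E Y C" "D \<subseteq> C"
  shows "(THE C. component V E Y C \<and> D \<subseteq> C) = C"
proof (rule the_equality)
  have "D \<noteq> {}" using assms by (simp add: conn_def)
  then show "\<And>C'. component V E Y C' \<and> D \<subseteq> C' \<Longrightarrow> C' = C"
    using comp_eq[of V E Y _ C] assms by blast
qed (use assms in auto)


locale dec =
  fixes VG :: "'v set" and EG :: "'v set set"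
    and VH :: "'h set" and EH :: "'h set set"
    and GV :: "'h \<Rightarrow> 'v set" and GE :: "'h \<Rightarrow> 'v set set"
  assumes gd: "graph_decomposition VG EG VH EH GV GE"
    and pf: "point_finite VG VH GV"
    and hon: "honest EH GV"
    and parts: "\<forall>h\<in>VH. finite (GV h) \<and> conn (GE h) (GV h)"
begin

definition Hv where "Hv v = {h\<in>VH. v \<in> GV h}"
definition XY where "XY Y = (\<Union>h\<in>Y. GV h)"
definition YX where "YX X = (\<Union>v\<in>X. Hv v)"

lemmas gdu = gd[unfolded graph_decomposition_def]
lemmas gdc = gdu[THEN conjunct2, THEN conjunct2, THEN conjunct1]
  gdu[THEN conjunct2, THEN conjunct2, THEN conjunct2, THEN conjunct1]
  gdu[THEN conjunct2, THEN conjunct2, THEN conjunct2, THEN conjunct2, THEN conjunct1]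
  gdu[THEN conjunct2, THEN conjunct2, THEN conjunct2, THEN conjunct2, THEN conjunct2]

lemmas VG_eq = gdc(2) and EG_eq = gdc(3)

lemma sg: "h \<in> VH \<Longrightarrow> subgraph (GV h) (GE h) VG EG"
  using gdc(1) by (rule bspec)

lemma GV_sub: "h \<in> VH \<Longrightarrow> GV h \<subseteq> VG" using VG_eq by auto

lemma GV_conn: assumes "h \<in> VH" shows "conn EG (GV h)"
proof (rule conn_mono)
  show "conn (GE h) (GV h)" using parts assms by simp
  show "GE h \<subseteq> EG" using sg[OF assms] unfolding subgraph_def by simp
qed

lemma GV_ne: "h \<in> VH \<Longrightarrow> GV h \<noteq> {}"
  using parts by (simp add: conn_def)

lemma GV_fin: "h \<in> VH \<Longrightarrow> finite (GV h)" using parts by auto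

lemma Hv_conn: "v \<in> VG \<Longrightarrow> conn EH (Hv v)"
  unfolding Hv_def using gdc(4) by (rule bspec)

lemma Hv_ne: "v \<in> VG \<Longrightarrow> Hv v \<noteq> {}"
  using Hv_conn by (simp add: conn_def)

lemma Hv_fin: "v \<in> VG \<Longrightarrow> finite (Hv v)"
  using pf unfolding point_finite_def Hv_def by simp

lemma Hv_sub: "Hv v \<subseteq> VH" unfolding Hv_def by auto

lemma edge_share: assumes "{a,b} \<in> EG" shows "Hv a \<inter> Hv b \<noteq> {}"
proof -
  obtain h where h: "h \<in> VH" "{a,b} \<in> GE h" using assms EG_eq by auto
  then have "{a,b} \<subseteq> GV h" using sg[OF h(1)] unfolding subgraph_def graph_def by auto
  then have "h \<in> Hv a \<inter> Hv b" using h unfolding Hv_def by auto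
  then show ?thesis by auto
qed

lemma XY_fin: "finite Y \<Longrightarrow> Y \<subseteq> VH \<Longrightarrow> finite (XY Y) \<and> XY Y \<subseteq> VG"
  unfolding XY_def using GV_fin GV_sub by auto

lemma YX_fin: "finite X \<Longrightarrow> X \<subseteq> VG \<Longrightarrow> finite (YX X) \<and> YX X \<subseteq> VH"
  unfolding YX_def using Hv_fin Hv_sub by auto

lemma Hv_disj: "v \<notin> XY Y \<Longrightarrow> Hv v \<inter> Y = {}"
  unfolding XY_def Hv_def by auto

lemma GV_disj: "h \<notin> YX X \<Longrightarrow> h \<in> VH \<Longrightarrow> GV h \<inter> X = {}"
  unfolding YX_def Hv_def by auto

lemma Y_sub: "Y \<subseteq> VH \<Longrightarrow> Y \<subseteq> YX (XY Y)"
proof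
  fix h assume "Y \<subseteq> VH" "h \<in> Y"
  then obtain v where "v \<in> GV h" using GV_ne by blast
  then show "h \<in> YX (XY Y)" using \<open>h \<in> Y\<close> \<open>Y \<subseteq> VH\<close> unfolding YX_def XY_def Hv_def by auto
qed

lemma X_sub: "X \<subseteq> VG \<Longrightarrow> X \<subseteq> XY (YX X)"
proof
  fix v assume "X \<subseteq> VG" "v \<in> X"
  then obtain h where "h \<in> Hv v" using Hv_ne by blast
  then show "v \<in> XY (YX X)" using \<open>v \<in> X\<close> unfolding YX_def XY_def Hv_def by auto
qed

lemma D_conn: "S \<subseteq> VG \<Longrightarrow> conn EG S \<Longrightarrow> conn EH (\<Union>v\<in>S. Hv v)"
  by (rule conn_UN[where Ea = EG]) (use edge_share Hv_conn in blast)+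

lemma U_conn: "S \<subseteq> VH \<Longrightarrow> conn EH S \<Longrightarrow> conn EG (\<Union>h\<in>S. GV h)"
  by (rule conn_UN[where Ea = EH]) (use hon in \<open>auto intro: GV_conn simp: honest_def\<close>)

lemma dir_comp: "direction V E f \<Longrightarrow> finite X \<Longrightarrow> X \<subseteq> V \<Longrightarrow> component V E X (f X)"
  unfolding direction_def by auto

lemma comp_props: "component V E X C \<Longrightarrow> C \<subseteq> V - X \<and> conn E C \<and> C \<noteq> {}"
  unfolding component_def by (simp add: conn_def)

lemma dir_mono: "direction V E f \<Longrightarrow> finite Y' \<Longrightarrow> Y' \<subseteq> V \<Longrightarrow> Y \<subseteq> Y' \<Longrightarrow> f Y' \<subseteq> f Y"
  unfolding direction_def by auto

lemma dir_out: "direction V E f \<Longrightarrow> \<not> (finite Y \<and> Y \<subseteq> V) \<Longrightarrow> f Y = {}"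
  unfolding direction_def by auto

lemma ind_eq: "finite Y \<Longrightarrow> Y \<subseteq> VH \<Longrightarrow>
  induced_dir VH EH GV f Y = (THE C. component VH EH Y C \<and> (\<Union>v\<in>f (XY Y). Hv v) \<subseteq> C)"
  by (simp add: induced_dir_def XY_def Hv_def)

lemma ind_comp:
  assumes f: "direction VG EG f" and Y: "finite Y" "Y \<subseteq> VH"
  shows "component VH EH Y (induced_dir VH EH GV f Y) \<and> (\<Union>v\<in>f (XY Y). Hv v) \<subseteq> induced_dir VH EH GV f Y
     \<and> (\<Union>v\<in>f (XY Y). Hv v) \<noteq> {}"
proof -
  have X: "finite (XY Y)" "XY Y \<subseteq> VG" using XY_fin[OF Y] by auto
  have c: "f (XY Y) \<subseteq> VG - XY Y" "conn EG (f (XY Y))" "f (XY Y) \<noteq> {}"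
    using comp_props[OF dir_comp[OF f X]] by auto
  have cD: "conn EH (\<Union>v\<in>f (XY Y). Hv v)" using D_conn c by auto
  have sD: "(\<Union>v\<in>f (XY Y). Hv v) \<subseteq> VH - Y" using c(1) Hv_disj Hv_sub by blast
  have "(\<Union>v\<in>f (XY Y). Hv v) \<noteq> {}" using cD by (simp add: conn_def)
  then show ?thesis using comp_the[OF cD sD] ind_eq[OF Y] by simp
qed

lemma partA:
  assumes f: "direction VG EG f" shows "direction VH EH (induced_dir VH EH GV f)"
  unfolding direction_def
proof (intro conjI allI impI)
  fix Y assume "finite Y \<and> Y \<subseteq> VH"
  then show "component VH EH Y (induced_dir VH EH GV f Y)" using ind_comp[OF f] by blast
next
  fix Y assume "\<not> (finite Y \<and> Y \<subseteq> VH)"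
  then show "induced_dir VH EH GV f Y = {}" unfolding induced_dir_def by auto
next
  fix Y Y' assume a: "finite Y' \<and> Y' \<subseteq> VH \<and> Y \<subseteq> Y'"
  then have Y: "finite Y" "Y \<subseteq> VH" using finite_subset by auto
  have A: "component VH EH Y' (induced_dir VH EH GV f Y')" "(\<Union>v\<in>f (XY Y'). Hv v) \<subseteq> induced_dir VH EH GV f Y'"
     "(\<Union>v\<in>f (XY Y'). Hv v) \<noteq> {}"
    using ind_comp[OF f] a by auto
  have B: "component VH EH Y (induced_dir VH EH GV f Y)" "(\<Union>v\<in>f (XY Y). Hv v) \<subseteq> induced_dir VH EH GV f Y"
    using ind_comp[OF f Y] by auto
  have "XY Y \<subseteq> XY Y'" using a unfolding XY_def by auto
  then have "f (XY Y') \<subseteq> f (XY Y)" using dir_mono[OF f] XY_fin a by blast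
  then have "(\<Union>v\<in>f (XY Y'). Hv v) \<subseteq> (\<Union>v\<in>f (XY Y). Hv v)" by auto
  then have ne: "induced_dir VH EH GV f Y' \<inter> induced_dir VH EH GV f Y \<noteq> {}" using A(2,3) B(2) by blast
  have p: "induced_dir VH EH GV f Y' \<subseteq> VH - Y'" "conn EH (induced_dir VH EH GV f Y')"
    using comp_props[OF A(1)] by auto
  show "induced_dir VH EH GV f Y' \<subseteq> induced_dir VH EH GV f Y"
    by (rule comp_absorb[OF B(1) p(2)]) (use p(1) a ne in auto)
qed

lemma partB:
  assumes f1: "direction VG EG f1" and f2: "direction VG EG f2"
    and eq: "induced_dir VH EH GV f1 = induced_dir VH EH GV f2"
  shows "f1 = f2"
proof
  fix X
  show "f1 X = f2 X"
  proof (cases "finite X \<and> X \<subseteq> VG")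
    case False
    then show ?thesis using dir_out f1 f2 by metis
  next
    case True
    define Y' where "Y' = YX X"
    have Y': "finite Y'" "Y' \<subseteq> VH" using YX_fin True Y'_def by auto
    define X' where "X' = XY Y'"
    have X': "finite X'" "X' \<subseteq> VG" using XY_fin[OF Y'] X'_def by auto
    have XX': "X \<subseteq> X'" using X_sub True X'_def Y'_def by auto
    define C where "C = induced_dir VH EH GV f1 Y'"
    have C1: "component VH EH Y' C" "(\<Union>v\<in>f1 X'. Hv v) \<subseteq> C"
      using ind_comp[OF f1 Y'] C_def X'_def by auto
    have C2: "(\<Union>v\<in>f2 X'. Hv v) \<subseteq> C"
      using ind_comp[OF f2 Y'] C_def X'_def eq by auto
    have Cp: "C \<subseteq> VH - Y'" "conn EH C" using comp_props[OF C1(1)] by auto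
    define U where "U = (\<Union>h\<in>C. GV h)"
    have cU: "conn EG U" unfolding U_def using U_conn Cp by blast
    have sU: "U \<subseteq> VG - X"
    proof -
      have "GV h \<subseteq> VG - X" if "h \<in> C" for h
        using GV_disj[of h X] GV_sub[of h] that Cp(1) Y'_def by auto
      then show ?thesis unfolding U_def by auto
    qed
    have inU: "\<exists>u. u \<in> U \<and> u \<in> f X" if f: "direction VG EG f" and fC: "(\<Union>v\<in>f X'. Hv v) \<subseteq> C" for f
    proof -
      obtain u where u: "u \<in> f X'" using comp_props[OF dir_comp[OF f X']] by blast
      then have uV: "u \<in> VG" using comp_props[OF dir_comp[OF f X']] by blast
      obtain h where h: "h \<in> Hv u" using Hv_ne[OF uV] by blast
      then have "h \<in> C" using fC u by blast
      then have "u \<in> U" using h unfolding U_def Hv_def by auto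
      moreover have "u \<in> f X" using u dir_mono[OF f X' XX'] by blast
      ultimately show ?thesis by blast
    qed
    have c1: "component VG EG X (f1 X)" and c2: "component VG EG X (f2 X)"
      using dir_comp f1 f2 True by auto
    obtain u1 where u1: "u1 \<in> U" "u1 \<in> f1 X" using inU[OF f1 C1(2)] by blast
    obtain u2 where u2: "u2 \<in> U" "u2 \<in> f2 X" using inU[OF f2 C2] by blast
    have "U \<subseteq> f2 X" by (rule comp_absorb[OF c2 cU sU]) (use u2 in blast)
    then have "f1 X \<inter> f2 X \<noteq> {}" using u1 by blast
    then show ?thesis using comp_eq[OF c1 c2] by blast
  qed
qed

definition fdir where
  "fdir g X = (if finite X \<and> X \<subseteq> VG then
     (THE C. component VG EG X C \<and> (\<Union>h\<in>g (YX X). GV h) \<subseteq> C) else {})"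

lemma fdir_comp:
  assumes g: "direction VH EH g" and X: "finite X" "X \<subseteq> VG"
  shows "component VG EG X (fdir g X) \<and> (\<Union>h\<in>g (YX X). GV h) \<subseteq> fdir g X
     \<and> (\<Union>h\<in>g (YX X). GV h) \<noteq> {}"
proof -
  have Y: "finite (YX X)" "YX X \<subseteq> VH" using YX_fin[OF X] by auto
  have c: "g (YX X) \<subseteq> VH - YX X" "conn EH (g (YX X))" "g (YX X) \<noteq> {}"
    using comp_props[OF dir_comp[OF g Y]] by auto
  have cD: "conn EG (\<Union>h\<in>g (YX X). GV h)" using U_conn c by auto
  have sD: "(\<Union>h\<in>g (YX X). GV h) \<subseteq> VG - X"
  proof -
    have "GV h \<subseteq> VG - X" if "h \<in> g (YX X)" for h
      using GV_disj[of h X] GV_sub[of h] that c(1) by auto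
    then show ?thesis by auto
  qed
  have "(\<Union>h\<in>g (YX X). GV h) \<noteq> {}" using cD by (simp add: conn_def)
  then show ?thesis using comp_the[OF cD sD] X unfolding fdir_def by simp
qed

lemma fdir_dir:
  assumes g: "direction VH EH g" shows "direction VG EG (fdir g)"
  unfolding direction_def
proof (intro conjI allI impI)
  fix X assume "finite X \<and> X \<subseteq> VG"
  then show "component VG EG X (fdir g X)" using fdir_comp[OF g] by blast
next
  fix X assume "\<not> (finite X \<and> X \<subseteq> VG)"
  then show "fdir g X = {}" unfolding fdir_def by auto
next
  fix X X' assume a: "finite X' \<and> X' \<subseteq> VG \<and> X \<subseteq> X'"
  then have X: "finite X" "X \<subseteq> VG" using finite_subset by auto
  have A: "component VG EG X' (fdir g X')" "(\<Union>h\<in>g (YX X'). GV h) \<subseteq> fdir g X'"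
     "(\<Union>h\<in>g (YX X'). GV h) \<noteq> {}"
    using fdir_comp[OF g] a by auto
  have B: "component VG EG X (fdir g X)" "(\<Union>h\<in>g (YX X). GV h) \<subseteq> fdir g X"
    using fdir_comp[OF g X] by auto
  have "YX X \<subseteq> YX X'" using a unfolding YX_def by auto
  then have "g (YX X') \<subseteq> g (YX X)" using dir_mono[OF g] YX_fin a by blast
  then have "(\<Union>h\<in>g (YX X'). GV h) \<subseteq> (\<Union>h\<in>g (YX X). GV h)" by auto
  then have ne: "fdir g X' \<inter> fdir g X \<noteq> {}" using A(2,3) B(2) by blast
  have p: "fdir g X' \<subseteq> VG - X'" "conn EG (fdir g X')"
    using comp_props[OF A(1)] by auto
  show "fdir g X' \<subseteq> fdir g X"
    by (rule comp_absorb[OF B(1) p(2)]) (use p(1) a ne in auto)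
qed

lemma partC:
  assumes g: "direction VH EH g" shows "induced_dir VH EH GV (fdir g) = g"
proof
  fix Y
  show "induced_dir VH EH GV (fdir g) Y = g Y"
  proof (cases "finite Y \<and> Y \<subseteq> VH")
    case False
    then show ?thesis using dir_out[OF g] unfolding induced_dir_def by auto
  next
    case True
    define X where "X = XY Y"
    have X: "finite X" "X \<subseteq> VG" using XY_fin True X_def by auto
    define Y' where "Y' = YX X"
    have Y': "finite Y'" "Y' \<subseteq> VH" using YX_fin[OF X] Y'_def by auto
    have YY': "Y \<subseteq> Y'" using Y_sub True X_def Y'_def by auto
    have F: "(\<Union>h\<in>g Y'. GV h) \<subseteq> fdir g X" using fdir_comp[OF g X] Y'_def by auto
    have I: "component VH EH Y (induced_dir VH EH GV (fdir g) Y)"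
      "(\<Union>v\<in>fdir g X. Hv v) \<subseteq> induced_dir VH EH GV (fdir g) Y"
      using ind_comp[OF fdir_dir[OF g]] True X_def by auto
    obtain h where h: "h \<in> g Y'" using comp_props[OF dir_comp[OF g Y']] by blast
    then have hV: "h \<in> VH" using comp_props[OF dir_comp[OF g Y']] by blast
    obtain v where v: "v \<in> GV h" using GV_ne[OF hV] by blast
    then have "v \<in> fdir g X" using F h by blast
    moreover have "h \<in> Hv v" using v hV unfolding Hv_def by auto
    ultimately have h1: "h \<in> induced_dir VH EH GV (fdir g) Y" using I(2) by blast
    have h2: "h \<in> g Y" using h dir_mono[OF g Y' YY'] by blast
    have cg: "component VH EH Y (g Y)" using dir_comp[OF g] True by auto
    show ?thesis using comp_eq[OF I(1) cg] h1 h2 by blast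
  qed
qed

lemma main: "bij_betw (induced_dir VH EH GV) (directions VG EG) (directions VH EH)"
  unfolding bij_betw_def
proof
  show "inj_on (induced_dir VH EH GV) (directions VG EG)"
    unfolding inj_on_def directions_def using partB by blast
  show "induced_dir VH EH GV ` directions VG EG = directions VH EH"
  proof
    show "induced_dir VH EH GV ` directions VG EG \<subseteq> directions VH EH"
      unfolding directions_def using partA by blast
    show "directions VH EH \<subseteq> induced_dir VH EH GV ` directions VG EG"
    proof
      fix g assume "g \<in> directions VH EH"
      then have g: "direction VH EH g" unfolding directions_def by auto
      then have "fdir g \<in> directions VG EG" using fdir_dir unfolding directions_def by auto
      then show "g \<in> induced_dir VH EH GV ` directions VG EG" using partC[OF g] by force
    qed
  qed
qed

end

theorem lemma3p5:
  fixes VG :: "'v set" and EG :: "'v set set"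
    and VH :: "'h set" and EH :: "'h set set"
    and GV :: "'h \<Rightarrow> 'v set" and GE :: "'h \<Rightarrow> 'v set set"
  assumes "graph_decomposition VG EG VH EH GV GE"
    and "point_finite VG VH GV"
    and "honest EH GV"
    and "\<forall>h\<in>VH. finite (GV h) \<and> conn (GE h) (GV h)"
  shows "bij_betw (induced_dir VH EH GV) (directions VG EG) (directions VH EH)"
  using dec.main[of VG EG VH EH GV GE] assms unfolding dec_def by blast

end
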